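(* Let $r\ge 3$ and let $F(x,y)=(f(x,y),x,y)$ be a germ at $o=(0,0)$ of a $C^r$ map into $\mathbf{R}^3_1$ with $f(0,0)=0$, $f_x(0,0)=0$, $f_y(0,0)=1$, such that $\{B_F\neq0\}$ is open and dense in the domain and $A_F-\varphi B_F^2\equiv0$ for some $C^{r-2}$ function germ $\varphi$ at $o$. Suppose that $o$ is a non-degenerate light-like point, i.e. $\nabla B_F(o)\neq(0,0)$. Then the Gaussian curvature $K=-C_F/B_F^2$ of $F$ diverges to $+\infty$ at $o$, i.e. $K(p)\to+\infty$ as $p\to o$ with $B_F(p)\neq0$.
   Context: $\mathbf{R}^3_1$ is Lorentz–Minkowski 3-space with coordinates $(t,x,y)$ and inner product $-dt^2+dx^2+dy^2$. $B_F:=1-f_x^2-f_y^2$, $A_F:=(1-f_x^2)f_{yy}+2f_xf_yf_{xy}+(1-f_y^2)f_{xx}$, $C_F:=f_{xx}f_{yy}-f_{xy}^2$; the Gaussian curvature of $F$ at points where $B_F\ne0$ is $K=-C_F/B_F^2$. *)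

theory Defs
  imports "HOL-Analysis.Analysis"
begin

definition pdx :: "(real \<times> real \<Rightarrow> real) \<Rightarrow> real \<times> real \<Rightarrow> real" where
  "pdx g p = deriv (\<lambda>t. g (t, snd p)) (fst p)"

definition pdy :: "(real \<times> real \<Rightarrow> real) \<Rightarrow> real \<times> real \<Rightarrow> real" where
  "pdy g p = deriv (\<lambda>t. g (fst p, t)) (snd p)"

fun Ck :: "nat \<Rightarrow> (real \<times> real) set \<Rightarrow> (real \<times> real \<Rightarrow> real) \<Rightarrow> bool" where
  "Ck 0 U g = continuous_on U g"
| "Ck (Suc k) U g = ((\<forall>p\<in>U. g differentiable (at p)) \<and> Ck k U (pdx g) \<and> Ck k U (pdy g))"

definition BF :: "(real \<times> real \<Rightarrow> real) \<Rightarrow> real \<times> real \<Rightarrow> real" where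
  "BF f p = 1 - (pdx f p)^2 - (pdy f p)^2"

definition AF :: "(real \<times> real \<Rightarrow> real) \<Rightarrow> real \<times> real \<Rightarrow> real" where
  "AF f p = (1 - (pdx f p)^2) * pdy (pdy f) p + 2 * pdx f p * pdy f p * pdy (pdx f) p
            + (1 - (pdy f p)^2) * pdx (pdx f) p"

definition CF :: "(real \<times> real \<Rightarrow> real) \<Rightarrow> real \<times> real \<Rightarrow> real" where
  "CF f p = pdx (pdx f) p * pdy (pdy f) p - (pdy (pdx f) p)^2"

definition gaussK :: "(real \<times> real \<Rightarrow> real) \<Rightarrow> real \<times> real \<Rightarrow> real" where
  "gaussK f p = - CF f p / (BF f p)^2"

end

theory Submission
  imports Defs
begin

lemma slice_x:
  fixes g :: "real \<times> real \<Rightarrow> real"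
  assumes "g differentiable (at (x, y))"
  shows "((\<lambda>t. g (t, y)) has_real_derivative pdx g (x, y)) (at x)"
proof -
  have "(\<lambda>t. (t, y)) differentiable (at x)"
    by (auto intro!: derivative_intros)
  then have "(g \<circ> (\<lambda>t. (t, y))) differentiable (at x)"
    using assms differentiable_chain_at by blast
  then have "(\<lambda>t. g (t, y)) differentiable (at x)" by (simp add: o_def)
  then show ?thesis
    unfolding pdx_def by (simp add: DERIV_deriv_iff_real_differentiable)
qed

lemma slice_y:
  fixes g :: "real \<times> real \<Rightarrow> real"
  assumes "g differentiable (at (x, y))"
  shows "((\<lambda>t. g (x, t)) has_real_derivative pdy g (x, y)) (at y)"
proof -
  have "(\<lambda>t. (x, t)) differentiable (at y)"
    by (auto intro!: derivative_intros)
  then have "(g \<circ> (\<lambda>t. (x, t))) differentiable (at y)"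
    using assms differentiable_chain_at by blast
  then have "(\<lambda>t. g (x, t)) differentiable (at y)" by (simp add: o_def)
  then show ?thesis
    unfolding pdy_def by (simp add: DERIV_deriv_iff_real_differentiable)
qed

lemma Ck_Suc_down: "Ck (Suc k) U g \<Longrightarrow> Ck k U g"
proof (induction k arbitrary: g)
  case 0
  then have "\<forall>p\<in>U. g differentiable (at p)" by simp
  then have "\<forall>p\<in>U. isCont g p" using differentiable_imp_continuous_within by blast
  then show ?case by (simp add: continuous_at_imp_continuous_on)
next
  case (Suc k)
  have h: "\<forall>p\<in>U. g differentiable (at p)" "Ck (Suc k) U (pdx g)" "Ck (Suc k) U (pdy g)"
    using Suc.prems unfolding Ck.simps(2)[of "Suc k" U g] by blast+
  have "Ck k U (pdx g)" by (rule Suc.IH[OF h(2)])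
  moreover have "Ck k U (pdy g)" by (rule Suc.IH[OF h(3)])
  ultimately show ?case using h(1) unfolding Ck.simps(2)[of k U g] by blast
qed

lemma Ck_mono: "k \<le> n \<Longrightarrow> Ck n U g \<Longrightarrow> Ck k U g"
proof (induction n)
  case 0
  then show ?case by simp
next
  case (Suc n)
  show ?case
  proof (cases "k = Suc n")
    case True
    then show ?thesis using Suc.prems(2) by simp
  next
    case False
    then have "k \<le> n" using Suc.prems(1) by simp
    moreover have "Ck n U g" by (rule Ck_Suc_down[OF Suc.prems(2)])
    ultimately show ?thesis by (rule Suc.IH)
  qed
qed

lemma norm_box:
  fixes s t h :: real
  assumes "0 \<le> s" "s \<le> h" "0 \<le> t" "t \<le> h"
  shows "dist (s, t) (0, 0) \<le> 2 * h"
proof -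
  have "norm (s, t) \<le> norm (s, 0::real) + norm (0::real, t)"
    using norm_triangle_ineq[of "(s, 0::real)" "(0::real, t)"] by simp
  also have "\<dots> = \<bar>s\<bar> + \<bar>t\<bar>" by (simp add: norm_Pair)
  finally show ?thesis using assms by (simp add: dist_norm)
qed


lemma abs_contra:
  fixes x a b :: real
  assumes "\<bar>x - a\<bar> < \<bar>a - b\<bar> / 2" "\<bar>x - b\<bar> < \<bar>a - b\<bar> / 2"
  shows False
proof -
  have "\<bar>(x - b) - (x - a)\<bar> \<le> \<bar>x - b\<bar> + \<bar>x - a\<bar>" by (rule abs_triangle_ineq4)
  then have "\<bar>a - b\<bar> \<le> \<bar>x - b\<bar> + \<bar>x - a\<bar>" by simp
  define u where "u = \<bar>a - b\<bar>"
  define v where "v = \<bar>x - b\<bar>"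
  define w where "w = \<bar>x - a\<bar>"
  have "u \<le> v + w" "w < u/2" "v < u/2" using assms \<open>\<bar>a - b\<bar> \<le> _\<close> by (simp_all add: u_def v_def w_def)
  then show False by linarith
qed

lemma mixed_sym:
  fixes g :: "real \<times> real \<Rightarrow> real"
  assumes U: "open U" "(0, 0) \<in> U"
    and d0: "\<forall>p\<in>U. g differentiable (at p)"
    and dx: "\<forall>p\<in>U. pdx g differentiable (at p)"
    and dy: "\<forall>p\<in>U. pdy g differentiable (at p)"
    and c1: "isCont (pdy (pdx g)) (0, 0)"
    and c2: "isCont (pdx (pdy g)) (0, 0)"
  shows "pdy (pdx g) (0, 0) = pdx (pdy g) (0, 0)"
proof (rule ccontr)
  define a where "a = pdy (pdx g) (0, 0)"
  define b where "b = pdx (pdy g) (0, 0)"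
  assume "pdy (pdx g) (0, 0) \<noteq> pdx (pdy g) (0, 0)"
  then have ab: "a \<noteq> b" by (simp add: a_def b_def)
  define \<epsilon> where "\<epsilon> = \<bar>a - b\<bar> / 2"
  have ep: "\<epsilon> > 0" using ab by (simp add: \<epsilon>_def)
  obtain e where e: "e > 0" "ball (0, 0) e \<subseteq> U"
    using U open_contains_ball by blast
  obtain d1 where d1: "d1 > 0" "\<forall>p. dist p (0, 0) < d1 \<longrightarrow> dist (pdy (pdx g) p) a < \<epsilon>"
    using c1 ep unfolding continuous_at_eps_delta a_def by blast
  obtain d2 where d2: "d2 > 0" "\<forall>p. dist p (0, 0) < d2 \<longrightarrow> dist (pdx (pdy g) p) b < \<epsilon>"
    using c2 ep unfolding continuous_at_eps_delta b_def by blast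
  define h where "h = min e (min d1 d2) / 4"
  have hpos: "h > 0" using e d1 d2 by (simp add: h_def)
  have inU: "(s, t) \<in> U" if "0 \<le> s" "s \<le> h" "0 \<le> t" "t \<le> h" for s t
  proof -
    have "dist (s, t) (0, 0) \<le> 2 * h" using norm_box that by blast
    also have "\<dots> < e" using e d1 d2 by (simp add: h_def)
    finally show ?thesis using e(2) by (auto simp: dist_commute)
  qed
  have near1: "dist (s, t) (0, 0) < d1" if "0 \<le> s" "s \<le> h" "0 \<le> t" "t \<le> h" for s t
  proof -
    have "dist (s, t) (0, 0) \<le> 2 * h" using norm_box that by blast
    also have "\<dots> < d1" using e d1 d2 by (simp add: h_def)
    finally show ?thesis .
  qed
  have near2: "dist (s, t) (0, 0) < d2" if "0 \<le> s" "s \<le> h" "0 \<le> t" "t \<le> h" for s t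
  proof -
    have "dist (s, t) (0, 0) \<le> 2 * h" using norm_box that by blast
    also have "\<dots> < d2" using e d1 d2 by (simp add: h_def)
    finally show ?thesis .
  qed
  define \<Delta> where "\<Delta> = g (h, h) - g (h, 0) - g (0, h) + g (0, 0)"
  obtain s1 where s1: "0 < s1" "s1 < h"
    "(g (h, h) - g (h, 0)) - (g (0, h) - g (0, 0)) = (h - 0) * (pdx g (s1, h) - pdx g (s1, 0))"
  proof -
    have "\<And>x. 0 \<le> x \<Longrightarrow> x \<le> h \<Longrightarrow>
      ((\<lambda>s. g (s, h) - g (s, 0)) has_real_derivative (pdx g (x, h) - pdx g (x, 0))) (at x)"
      by (intro DERIV_diff slice_x) (use d0 inU hpos in auto)
    from MVT2[OF hpos this] show ?thesis using that by auto
  qed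
  obtain t1 where t1: "0 < t1" "t1 < h"
    "pdx g (s1, h) - pdx g (s1, 0) = (h - 0) * pdy (pdx g) (s1, t1)"
  proof -
    have "\<And>x. 0 \<le> x \<Longrightarrow> x \<le> h \<Longrightarrow>
      ((\<lambda>t. pdx g (s1, t)) has_real_derivative pdy (pdx g) (s1, x)) (at x)"
      by (intro slice_y) (use dx inU s1 in auto)
    from MVT2[OF hpos this] show ?thesis using that by auto
  qed
  obtain t2 where t2: "0 < t2" "t2 < h"
    "(g (h, h) - g (0, h)) - (g (h, 0) - g (0, 0)) = (h - 0) * (pdy g (h, t2) - pdy g (0, t2))"
  proof -
    have "\<And>x. 0 \<le> x \<Longrightarrow> x \<le> h \<Longrightarrow>
      ((\<lambda>t. g (h, t) - g (0, t)) has_real_derivative (pdy g (h, x) - pdy g (0, x))) (at x)"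
      by (intro DERIV_diff slice_y) (use d0 inU hpos in auto)
    from MVT2[OF hpos this] show ?thesis using that by auto
  qed
  obtain s2 where s2: "0 < s2" "s2 < h"
    "pdy g (h, t2) - pdy g (0, t2) = (h - 0) * pdx (pdy g) (s2, t2)"
  proof -
    have "\<And>x. 0 \<le> x \<Longrightarrow> x \<le> h \<Longrightarrow>
      ((\<lambda>s. pdy g (s, t2)) has_real_derivative pdx (pdy g) (x, t2)) (at x)"
      by (intro slice_x) (use dy inU t2 in auto)
    from MVT2[OF hpos this] show ?thesis using that by auto
  qed
  have "h * h * pdy (pdx g) (s1, t1) = h * h * pdx (pdy g) (s2, t2)"
    using s1(3) t1(3) t2(3) s2(3) by (simp add: algebra_simps)
  then have eq: "pdy (pdx g) (s1, t1) = pdx (pdy g) (s2, t2)" using hpos by simp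
  have "dist (pdy (pdx g) (s1, t1)) a < \<epsilon>"
    using d1(2) near1[of s1 t1] s1 t1 by auto
  moreover have "dist (pdx (pdy g) (s2, t2)) b < \<epsilon>"
    using d2(2) near2[of s2 t2] s2 t2 by auto
  ultimately have "\<bar>pdy (pdx g) (s1, t1) - a\<bar> < \<bar>a - b\<bar> / 2" "\<bar>pdy (pdx g) (s1, t1) - b\<bar> < \<bar>a - b\<bar> / 2"
    using eq unfolding \<epsilon>_def dist_real_def by auto
  then show False by (rule abs_contra)
qed


theorem proposition3p8:
  fixes f \<phi> :: "real \<times> real \<Rightarrow> real" and U :: "(real \<times> real) set" and r :: nat
  assumes "r \<ge> 3"
    and "open U" and "(0, 0) \<in> U"
    and "Ck r U f"
    and "f (0, 0) = 0" and "pdx f (0, 0) = 0" and "pdy f (0, 0) = 1"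
    and "open {p \<in> U. BF f p \<noteq> 0}" and "U \<subseteq> closure {p \<in> U. BF f p \<noteq> 0}"
    and "Ck (r - 2) U \<phi>"
    and "\<forall>p\<in>U. AF f p - \<phi> p * (BF f p)^2 = 0"
    and "(pdx (BF f) (0, 0), pdy (BF f) (0, 0)) \<noteq> (0, 0)"
  shows "filterlim (gaussK f) at_top (at (0, 0) within {p \<in> U. BF f p \<noteq> 0})"
proof -
  have "Ck (Suc (Suc (Suc 0))) U f"
    using Ck_mono[of 3 r U f] assms(1,4) by (simp add: numeral_eq_Suc)
  then have df: "\<forall>p\<in>U. f differentiable (at p)"
    and dfx: "\<forall>p\<in>U. pdx f differentiable (at p)"
    and dfy: "\<forall>p\<in>U. pdy f differentiable (at p)"
    and dfxx: "\<forall>p\<in>U. pdx (pdx f) differentiable (at p)"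
    and dfxy: "\<forall>p\<in>U. pdy (pdx f) differentiable (at p)"
    and dfyx: "\<forall>p\<in>U. pdx (pdy f) differentiable (at p)"
    and dfyy: "\<forall>p\<in>U. pdy (pdy f) differentiable (at p)"
    by simp_all
  have o: "(0::real, 0::real) \<in> U" by (rule assms(3))
  have Dx1: "((\<lambda>t. pdx f (t, 0)) has_real_derivative pdx (pdx f) (0, 0)) (at 0)"
    by (rule slice_x) (use dfx o in auto)
  have Dx2: "((\<lambda>t. pdy f (t, 0)) has_real_derivative pdx (pdy f) (0, 0)) (at 0)"
    by (rule slice_x) (use dfy o in auto)
  have Dy1: "((\<lambda>t. pdx f (0, t)) has_real_derivative pdy (pdx f) (0, 0)) (at 0)"
    by (rule slice_y) (use dfx o in auto)
  have Dy2: "((\<lambda>t. pdy f (0, t)) has_real_derivative pdy (pdy f) (0, 0)) (at 0)"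
    by (rule slice_y) (use dfy o in auto)
  note Dbx = DERIV_diff[OF DERIV_diff[OF DERIV_const[of "1::real"] DERIV_power[OF Dx1, of 2]] DERIV_power[OF Dx2, of 2]]
  note Dby = DERIV_diff[OF DERIV_diff[OF DERIV_const[of "1::real"] DERIV_power[OF Dy1, of 2]] DERIV_power[OF Dy2, of 2]]
  have bx: "pdx (BF f) (0, 0) = - 2 * pdx (pdy f) (0, 0)"
    unfolding pdx_def[of "BF f"] BF_def using DERIV_imp_deriv[OF Dbx] assms(6,7) by simp
  have by': "pdy (BF f) (0, 0) = - 2 * pdy (pdy f) (0, 0)"
    unfolding pdy_def[of "BF f"] BF_def using DERIV_imp_deriv[OF Dby] assms(6,7) by simp
  have B0: "BF f (0, 0) = 0" using assms(6,7) by (simp add: BF_def)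
  have "AF f (0, 0) = 0" using assms(11) o B0 by auto
  then have fyy: "pdy (pdy f) (0, 0) = 0" using assms(6,7) by (simp add: AF_def)
  have fyx: "pdx (pdy f) (0, 0) \<noteq> 0" using assms(12) bx by' fyy by auto
  have sym: "pdy (pdx f) (0, 0) = pdx (pdy f) (0, 0)"
    by (rule mixed_sym[OF assms(2,3) df dfx dfy])
       (use dfxy dfyx o in \<open>auto intro: differentiable_imp_continuous_within\<close>)
  have C0: "CF f (0, 0) < 0"
    using sym fyx fyy by (simp add: CF_def)
  define S where "S = {p \<in> U. BF f p \<noteq> 0}"
  let ?F = "at (0::real, 0::real) within S"
  have cxx: "isCont (pdx (pdx f)) (0, 0)" using dfxx o differentiable_imp_continuous_within by blast
  have cxy: "isCont (pdy (pdx f)) (0, 0)" using dfxy o differentiable_imp_continuous_within by blast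
  have cyy: "isCont (pdy (pdy f)) (0, 0)" using dfyy o differentiable_imp_continuous_within by blast
  have cx: "isCont (pdx f) (0, 0)" using dfx o differentiable_imp_continuous_within by blast
  have cy: "isCont (pdy f) (0, 0)" using dfy o differentiable_imp_continuous_within by blast
  have cC: "isCont (\<lambda>p. - CF f p) (0, 0)"
    unfolding CF_def using cxx cxy cyy by (intro continuous_intros)
  have cB: "isCont (\<lambda>p. (BF f p)^2) (0, 0)"
    unfolding BF_def using cx cy by (intro continuous_intros)
  have t1: "((\<lambda>p. - CF f p) \<longlongrightarrow> - CF f (0, 0)) ?F"
    using continuous_at_imp_continuous_at_within[OF cC] by (simp add: continuous_within)
  have t2: "((\<lambda>p. (BF f p)^2) \<longlongrightarrow> 0) ?F"
    using continuous_at_imp_continuous_at_within[OF cB] B0 by (simp add: continuous_within)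
  have ev: "eventually (\<lambda>p. (BF f p)^2 > 0) ?F"
    unfolding S_def eventually_at_filter by (auto intro!: always_eventually)
  have "filterlim (\<lambda>p. (BF f p)^2) (at_right 0) ?F"
    by (rule tendsto_imp_filterlim_at_right[OF t2 ev])
  then have inv: "filterlim (\<lambda>p. inverse ((BF f p)^2)) at_top ?F"
    by (rule filterlim_compose[OF filterlim_inverse_at_top_right])
  have "filterlim (\<lambda>p. - CF f p * inverse ((BF f p)^2)) at_top ?F"
    by (rule filterlim_tendsto_pos_mult_at_top[OF t1 _ inv]) (use C0 in simp)
  moreover have "gaussK f = (\<lambda>p. - CF f p * inverse ((BF f p)^2))"
    by (auto simp: gaussK_def divide_inverse)
  ultimately show ?thesis unfolding S_def by simp
qed

end
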